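(* Let $(\eta_k)_{k\in\mathbb N}$ be i.i.d. real random variables with $\mathbb{E}\eta_1=0$ and $\mathbb{E}\eta_1^2=1$, and let $\alpha>-1/2$. Then for every $\rho>0$, $$\lim_{s\to0+}f_\alpha(s)\sum_{k\ge M(s)+1}\frac{(\log k)^\alpha}{k^{1/2+s}}|\eta_k|\,\mathbf{1}_{\mathcal{A}_{k,\rho}(s)}=0\quad\text{a.s.}$$ and $$\lim_{s\to0+}f_\alpha(s)\sum_{k\ge M(s)+1}\frac{(\log k)^\alpha}{k^{1/2+s}}\mathbb{E}\big(|\eta_k|\,\mathbf{1}_{\mathcal{A}_{k,\rho}(s)}\big)=0.$$
   Context: $M(s)=\lfloor 1/s\rfloor$ for $s>0$; $c_\alpha=\Gamma(1+2\alpha)/2^{2\alpha}$; $f_\alpha(s)=\big(s^{1+2\alpha}/(c_\alpha\log\log(1/s))\big)^{1/2}$ for $s\in(0,1/e)$. For $k\in\mathbb N$, $\rho>0$, $s\in(0,1/e)$, $\mathcal{A}_{k,\rho}(s)$ is the event $$\Big\{|\eta_k|>\frac{\rho}{(\log k)^\alpha\log(1/s)}\Big(\frac{k^{1+s}}{s^{1+2\alpha}\log\log(1/s)}\Big)^{1/2}\Big\}.$$ *)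

theory Defs
  imports "HOL-Probability.Probability"
begin

definition Mfun :: "real \<Rightarrow> nat" where
  "Mfun s = nat \<lfloor>1 / s\<rfloor>"

definition c_alpha :: "real \<Rightarrow> real" where
  "c_alpha \<alpha> = Gamma (1 + 2 * \<alpha>) / 2 powr (2 * \<alpha>)"

definition f_alpha :: "real \<Rightarrow> real \<Rightarrow> real" where
  "f_alpha \<alpha> s = sqrt (s powr (1 + 2 * \<alpha>) / (c_alpha \<alpha> * ln (ln (1 / s))))"

text \<open>The event A_{k,rho}(s), as a predicate on the value of eta_k.\<close>
definition A_event :: "real \<Rightarrow> nat \<Rightarrow> real \<Rightarrow> real \<Rightarrow> real \<Rightarrow> bool" where
  "A_event \<alpha> k \<rho> s x \<longleftrightarrow>
     \<bar>x\<bar> > \<rho> / ((ln (real k)) powr \<alpha> * ln (1 / s)) *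
            sqrt (real k powr (1 + s) / (s powr (1 + 2 * \<alpha>) * ln (ln (1 / s))))"

definition wgt :: "real \<Rightarrow> real \<Rightarrow> nat \<Rightarrow> real" where
  "wgt \<alpha> s k = (ln (real k)) powr \<alpha> / real k powr (1/2 + s)"

end

theory Submission
  imports Defs "HOL-Real_Asymp.Real_Asymp"
begin

lemma ln_powr_bound:
  fixes a t x :: real
  assumes "a > 0" "t > 0" "x \<ge> 1"
  shows "ln x powr a \<le> (a/t) powr a * x powr t"
proof -
  have "ln (x powr (t/a)) \<le> x powr (t/a) - 1"
    by (rule ln_le_minus_one) (use assms in auto)
  moreover have "ln (x powr (t/a)) = (t/a) * ln x" using assms by (simp add: ln_powr)
  ultimately have "(t/a) * ln x \<le> x powr (t/a)" by linarith
  hence h: "ln x \<le> (a/t) * x powr (t/a)" using assms by (simp add: field_simps)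
  have "ln x powr a \<le> ((a/t) * x powr (t/a)) powr a"
    by (rule powr_mono2) (use assms h in auto)
  also have "\<dots> = (a/t) powr a * (x powr (t/a)) powr a"
    by (rule powr_mult)
  also have "\<dots> = (a/t) powr a * x powr t"
    using assms by (simp add: powr_powr)
  finally show ?thesis .
qed

definition Cw :: "real \<Rightarrow> real \<Rightarrow> real" where
  "Cw a s = (if a > 0 then (a/s) powr a else 1)"

lemma wgt_bound:
  assumes "s > 0" "k \<ge> 3"
  shows "wgt a s k \<le> Cw a s / sqrt (real k)" "wgt a s k \<ge> 0"
proof -
  have k3: "real k \<ge> 3" using assms by simp
  have lnk: "ln (real k) \<ge> 1" using ln3_gt_1 k3
    by (smt (verit) ln_le_cancel_iff)
  have kp: "real k powr (1/2+s) = sqrt k * real k powr s"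
    by (simp add: powr_add powr_half_sqrt)
  have sk: "sqrt (real k) > 0" using k3 by simp
  have ks: "real k powr s \<ge> 1" using k3 assms by (simp add: ge_one_powr_ge_zero)
  show "wgt a s k \<ge> 0" unfolding wgt_def by simp
  show "wgt a s k \<le> Cw a s / sqrt (real k)"
  proof (cases "a > 0")
    case True
    have "ln (real k) powr a \<le> (a/s) powr a * real k powr s"
      by (rule ln_powr_bound) (use True assms k3 in auto)
    hence "wgt a s k \<le> (a/s) powr a * real k powr s / (sqrt k * real k powr s)"
      unfolding wgt_def kp using sk ks by (intro divide_right_mono) auto
    also have "\<dots> = Cw a s / sqrt k" using True ks unfolding Cw_def by auto
    finally show ?thesis .
  next
    case False
    have "ln (real k) powr a \<le> ln (real k) powr 0"
      by (rule powr_mono) (use False lnk in auto)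
    hence p1: "ln (real k) powr a \<le> 1" using lnk by simp
    have "wgt a s k \<le> 1 / (sqrt k * real k powr s)"
      unfolding wgt_def kp using sk ks p1 by (intro divide_right_mono) auto
    also have "\<dots> \<le> 1 / sqrt k" using sk ks
      by (intro divide_left_mono) (auto simp: mult_le_cancel_left1 )
    finally show ?thesis using False unfolding Cw_def by simp
  qed
qed

lemma sum_sqrt_le:
  fixes y :: real assumes "y \<ge> 0"
  shows "(\<Sum>n<N. (if real (n+1) < y then 1 else 0) / sqrt (real (n+1))) \<le> 2 * sqrt (min (real N) y)"
proof (induction N)
  case 0 then show ?case using assms by simp
next
  case (Suc N)
  show ?case
  proof (cases "real (N+1) < y")
    case True
    define a where "a = sqrt (real N)"
    define b where "b = sqrt (real N + 1)"
    have ab: "b^2 = a^2 + 1" "a \<ge> 0" "b > 0" unfolding a_def b_def by auto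
    have "2*a*b \<le> a^2 + b^2" by (smt (verit) sum_squares_bound)
    hence key: "2*a + 1/b \<le> 2*b" using ab
      by (simp add: field_simps power2_eq_square)
    have "(\<Sum>n<Suc N. (if real (n+1) < y then 1 else 0) / sqrt (real (n+1)))
        = (\<Sum>n<N. (if real (n+1) < y then 1 else 0) / sqrt (real (n+1))) + 1/b"
      using True by (simp add: b_def add.commute)
    also have "\<dots> \<le> 2 * sqrt (min (real N) y) + 1/b" using Suc by simp
    also have "\<dots> \<le> 2 * a + 1/b" unfolding a_def by simp
    also have "\<dots> \<le> 2 * sqrt (min (real (Suc N)) y)" using key True unfolding b_def by (simp add: add.commute)
    finally show ?thesis .
  next
    case False
    have "(\<Sum>n<Suc N. (if real (n+1) < y then 1 else 0) / sqrt (real (n+1)))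
        = (\<Sum>n<N. (if real (n+1) < y then 1 else 0) / sqrt (real (n+1)))"
      using False by simp
    also have "\<dots> \<le> 2 * sqrt (min (real N) y)" using Suc by simp
    also have "\<dots> \<le> 2 * sqrt (min (real (Suc N)) y)" by simp
    finally show ?thesis .
  qed
qed

lemma sum_ind_le:
  fixes y :: real assumes "y \<ge> 0"
  shows "(\<Sum>n<N. (if real (n+1) < y then 1 else 0)) \<le> min (real N) y"
proof (induction N)
  case 0 then show ?case using assms by simp
next
  case (Suc N) then show ?case by auto
qed

lemma shift_sum_le:
  fixes h :: "nat \<Rightarrow> real"
  assumes "\<And>n. 0 \<le> h n"
  shows "(\<Sum>n<N. h (n+m)) \<le> (\<Sum>n<N+m. h n)"
proof -
  have "(\<Sum>n<N. h (n+m)) = (\<Sum>n\<in>{m..<N+m}. h n)"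
    using sum.shift_bounds_nat_ivl[of h 0 m N] by (simp add: atLeast0LessThan add.commute)
  also have "\<dots> \<le> (\<Sum>n<N+m. h n)" by (rule sum_mono2) (auto simp: assms)
  finally show ?thesis .
qed

lemma sum_shift_sqrt:
  fixes x :: real
  shows "(\<Sum>n<N. \<bar>x\<bar> * (if real (n+m+1) < x\<^sup>2 then 1 else 0) / sqrt (real (n+m+1))) \<le> 2 * x\<^sup>2"
proof -
  let ?h = "\<lambda>n. (if real (n+1) < x\<^sup>2 then 1 else 0) / sqrt (real (n+1))"
  have "(\<Sum>n<N. \<bar>x\<bar> * (if real (n+m+1) < x\<^sup>2 then 1 else 0) / sqrt (real (n+m+1)))
     = \<bar>x\<bar> * (\<Sum>n<N. ?h (n+m))"
    by (simp add: sum_distrib_left)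
  also have "\<dots> \<le> \<bar>x\<bar> * (\<Sum>n<N+m. ?h n)"
    by (intro mult_left_mono shift_sum_le) auto
  also have "\<dots> \<le> \<bar>x\<bar> * (2 * sqrt (min (real (N+m)) (x\<^sup>2)))"
    by (intro mult_left_mono sum_sqrt_le) auto
  also have "\<dots> \<le> \<bar>x\<bar> * (2 * sqrt (x\<^sup>2))"
  proof -
    have "sqrt (min (real (N+m)) (x\<^sup>2)) \<le> sqrt (x\<^sup>2)" by (rule real_sqrt_le_mono) simp
    thus ?thesis by (intro mult_left_mono) auto
  qed
  also have "\<dots> = 2 * x\<^sup>2" by (simp add: power2_eq_square)
  finally show ?thesis .
qed

definition Gt :: "real \<Rightarrow> real \<Rightarrow> real" where
  "Gt a s = (if a > 0 then (2*a/s) powr a else 1)"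

lemma key_threshold:
  assumes s: "0 < s" "s < 1" and LL: "ln (ln (1/s)) > 0" and k: "k \<ge> 3"
    and cond: "Gt a s * ln (1/s) * sqrt (s powr (1+2*a) * ln (ln (1/s))) \<le> \<rho>"
    and A: "A_event a k \<rho> s x"
  shows "real k < x\<^sup>2"
proof -
  define P where "P = ln (real k) powr a"
  define L where "L = ln (1/s)"
  define Q where "Q = sqrt (s powr (1+2*a) * ln (ln (1/s)))"
  define E where "E = real k powr (s/2)"
  have k3: "real k \<ge> 3" using k by simp
  have lnk: "ln (real k) \<ge> 1" using ln3_gt_1 k3
    by (smt (verit) ln_le_cancel_iff)
  have P0: "P > 0" unfolding P_def using lnk by simp
  have L0: "L > 0" unfolding L_def using s by simp
  have Q0: "Q > 0" unfolding Q_def using s LL by simp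
  have E1: "E \<ge> 1" unfolding E_def using k3 s by (simp add: ge_one_powr_ge_zero)
  have PG: "P \<le> Gt a s * E"
  proof (cases "a > 0")
    case True
    have "P \<le> (a/(s/2)) powr a * real k powr (s/2)"
      unfolding P_def by (rule ln_powr_bound) (use True s k3 in auto)
    moreover have "a/(s/2) = 2*a/s" by simp
    ultimately show ?thesis using True unfolding Gt_def E_def by (simp add: mult.commute)
  next
    case False
    have "ln (real k) powr a \<le> ln (real k) powr 0" by (rule powr_mono) (use False lnk in auto)
    hence "P \<le> 1" using lnk unfolding P_def by simp
    thus ?thesis using False E1 unfolding Gt_def by simp
  qed
  have cond': "Gt a s * L * Q \<le> \<rho>" using cond unfolding L_def Q_def .
  have sq: "sqrt (real k powr (1+s) / (s powr (1+2*a) * ln (ln (1/s)))) = sqrt (real k) * E / Q"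
  proof -
    have e1: "real k powr (1+s) = real k * real k powr s" using k3 by (simp add: powr_add)
    have e2: "sqrt (real k powr s) = E" unfolding E_def using powr_half_sqrt_powr[of "real k" s] by simp
    show ?thesis unfolding Q_def e1 by (simp add: real_sqrt_divide real_sqrt_mult e2)
  qed
  have "P*L*Q \<le> Gt a s * E * L * Q" using PG L0 Q0 by (simp add: mult_right_mono)
  also have "\<dots> = E * (Gt a s * L * Q)" by simp
  also have "\<dots> \<le> E * \<rho>" using cond' E1 by (simp add: mult_left_mono)
  finally have PLQ: "P*L*Q \<le> E*\<rho>" .
  have pos: "P*L*Q > 0" using P0 L0 Q0 by simp
  have "sqrt (real k) * (P*L*Q) \<le> sqrt (real k) * (E*\<rho>)"
    using PLQ by (intro mult_left_mono) auto
  hence "sqrt (real k) \<le> \<rho> * (sqrt (real k) * E) / (P*L*Q)"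
    using pos by (simp add: pos_le_divide_eq mult_ac)
  also have "\<dots> = \<rho> / (P * L) * (sqrt (real k) * E / Q)" by simp
  also have "\<dots> < \<bar>x\<bar>" using A unfolding A_event_def sq[symmetric] P_def L_def by simp
  finally have "sqrt (real k) < sqrt (x\<^sup>2)" by simp
  thus ?thesis using real_sqrt_less_iff by blast
qed

lemma powr_id:
  fixes s b a X :: real
  assumes "s > 0" "b > 0" "X \<ge> 0"
  shows "(b/s) powr a * sqrt (s powr (1+2*a) * X) = b powr a * sqrt (s * X)"
proof -
  have h1: "sqrt (s powr (1+2*a) * X) = s powr ((1+2*a)/2) * sqrt X"
    using assms powr_half_sqrt_powr[of s "1+2*a"] by (simp add: real_sqrt_mult)
  have h2: "(b/s) powr a = b powr a * s powr (-a)"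
    using assms by (simp add: powr_divide powr_minus_divide)
  have h3: "s powr (-a) * s powr ((1+2*a)/2) = sqrt s"
  proof -
    have "s powr (-a) * s powr ((1+2*a)/2) = s powr (-a + (1+2*a)/2)" using powr_add[of s "-a" "(1+2*a)/2"] by simp
    also have "-a + (1+2*a)/2 = 1/2" by (simp add: field_simps)
    finally show ?thesis using assms by (simp add: powr_half_sqrt)
  qed
  have "(b/s) powr a * sqrt (s powr (1+2*a) * X) = b powr a * (s powr (-a) * s powr ((1+2*a)/2)) * sqrt X"
    unfolding h1 h2 by (simp add: mult_ac)
  also have "\<dots> = b powr a * sqrt (s * X)" unfolding h3 by (simp add: real_sqrt_mult)
  finally show ?thesis .
qed

lemma ev_LL: "eventually (\<lambda>s. ln (ln (1/s)) > (0::real)) (at_right 0)"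
proof -
  have "filterlim (\<lambda>s::real. ln (ln (1/s))) at_top (at_right 0)" by real_asymp
  thus ?thesis by (simp add: filterlim_at_top_dense)
qed

lemma lim_cond:
  assumes "\<rho> > 0" "a > -1/2"
  shows "eventually (\<lambda>s. Gt a s * ln (1/s) * sqrt (s powr (1+2*a) * ln (ln (1/s))) \<le> \<rho>) (at_right 0)"
proof -
  have "((\<lambda>s. Gt a s * ln (1/s) * sqrt (s powr (1+2*a) * ln (ln (1/s)))) \<longlongrightarrow> 0) (at_right 0)"
  proof (cases "a > 0")
    case True
    have "((\<lambda>s. (2*a) powr a * (ln (1/s) * sqrt (s * ln (ln (1/s))))) \<longlongrightarrow> (2*a) powr a * 0) (at_right 0)"
      by (intro tendsto_mult_left) real_asymp
    moreover
    have "eventually (\<lambda>s. (2*a) powr a * (ln (1/s) * sqrt (s * ln (ln (1/s))))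
        = Gt a s * ln (1/s) * sqrt (s powr (1+2*a) * ln (ln (1/s)))) (at_right 0)"
      using eventually_conj[OF ev_LL eventually_at_right_less[of "0::real"]]
    proof (rule eventually_mono)
      fix s :: real assume h: "0 < ln (ln (1/s)) \<and> 0 < s"
      have "Gt a s * ln (1/s) * sqrt (s powr (1+2*a) * ln (ln (1/s)))
          = ln (1/s) * ((2*a/s) powr a * sqrt (s powr (1+2*a) * ln (ln (1/s))))"
        using True unfolding Gt_def by (simp add: mult_ac)
      also have "\<dots> = ln (1/s) * ((2*a) powr a * sqrt (s * ln (ln (1/s))))"
        using h True by (subst powr_id) auto
      finally show "(2*a) powr a * (ln (1/s) * sqrt (s * ln (ln (1/s))))
        = Gt a s * ln (1/s) * sqrt (s powr (1+2*a) * ln (ln (1/s)))" by (metis mult.commute mult.left_commute)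
    qed
    ultimately have "((\<lambda>s. Gt a s * ln (1/s) * sqrt (s powr (1+2*a) * ln (ln (1/s)))) \<longlongrightarrow> (2*a) powr a * 0) (at_right 0)"
      by (rule Lim_transform_eventually)
    thus ?thesis by simp
  next
    case False
    have b: "1 + 2*a > 0" using assms by simp
    have "((\<lambda>s. ln (1/s) * sqrt (s powr (1+2*a) * ln (ln (1/s)))) \<longlongrightarrow> 0) (at_right 0)"
      using b by real_asymp
    thus ?thesis using False unfolding Gt_def by simp
  qed
  from order_tendstoD(2)[OF this assms(1)] show ?thesis by (auto elim: eventually_mono)
qed

lemma lim_f:
  assumes "a > -1/2"
  shows "((\<lambda>s. f_alpha a s * (Cw a s * 2)) \<longlongrightarrow> 0) (at_right 0)"
proof -
  define c where "c = c_alpha a"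
  have c: "c > 0" unfolding c_def c_alpha_def using assms by simp
  show ?thesis
  proof (cases "a > 0")
    case True
    have "((\<lambda>s. 2 * a powr a * sqrt (s * (1 / (c * ln (ln (1/s)))))) \<longlongrightarrow> 2 * a powr a * 0) (at_right 0)"
      by (intro tendsto_mult_left) (use c in real_asymp)
    moreover
    have "eventually (\<lambda>s. 2 * a powr a * sqrt (s * (1 / (c * ln (ln (1/s)))))
        = f_alpha a s * (Cw a s * 2)) (at_right 0)"
      using eventually_conj[OF ev_LL eventually_at_right_less[of "0::real"]]
    proof (rule eventually_mono)
      fix s :: real assume h: "0 < ln (ln (1/s)) \<and> 0 < s"
      have "f_alpha a s * (Cw a s * 2) = 2 * ((a/s) powr a * sqrt (s powr (1+2*a) * (1 / (c * ln (ln (1/s))))))"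
        using True unfolding f_alpha_def Cw_def c_def by (simp add: mult_ac)
      also have "\<dots> = 2 * (a powr a * sqrt (s * (1 / (c * ln (ln (1/s))))))"
        using h True c by (subst powr_id) auto
      finally show "2 * a powr a * sqrt (s * (1 / (c * ln (ln (1/s))))) = f_alpha a s * (Cw a s * 2)" by (metis mult.commute mult.left_commute)
    qed
    ultimately have "((\<lambda>s. f_alpha a s * (Cw a s * 2)) \<longlongrightarrow> 2 * a powr a * 0) (at_right 0)"
      by (rule Lim_transform_eventually)
    thus ?thesis by simp
  next
    case False
    have b: "1 + 2*a > 0" using assms by simp
    have "((\<lambda>s. sqrt (s powr (1 + 2 * a) / (c * ln (ln (1 / s)))) * (1 * 2)) \<longlongrightarrow> 0) (at_right 0)"
      using b c by real_asymp
    thus ?thesis using False unfolding f_alpha_def Cw_def c_def by simp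
  qed
qed

theorem lemma5p3:
  fixes M :: "'a measure" and \<eta> :: "nat \<Rightarrow> 'a \<Rightarrow> real" and \<alpha> \<rho> :: real
  assumes "prob_space M"
    and "\<And>k. k \<ge> 1 \<Longrightarrow> \<eta> k \<in> borel_measurable M"
    and "prob_space.indep_vars M (\<lambda>_. borel) \<eta> {1..}"
    and "\<And>k. k \<ge> 1 \<Longrightarrow> distr M borel (\<eta> k) = distr M borel (\<eta> 1)"
    and "integrable M (\<eta> 1)" and "(\<integral>x. \<eta> 1 x \<partial>M) = 0"
    and "integrable M (\<lambda>x. (\<eta> 1 x)\<^sup>2)" and "(\<integral>x. (\<eta> 1 x)\<^sup>2 \<partial>M) = 1"
    and "\<alpha> > -1/2" and "\<rho> > 0"
  shows "(AE \<omega> in M.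
            (\<forall>\<^sub>F s in at_right 0. summable (\<lambda>n. let k = n + Mfun s + 1 in
                 wgt \<alpha> s k * \<bar>\<eta> k \<omega>\<bar> * (if A_event \<alpha> k \<rho> s (\<eta> k \<omega>) then 1 else 0)))
          \<and> ((\<lambda>s. f_alpha \<alpha> s * (\<Sum>n. let k = n + Mfun s + 1 in
                 wgt \<alpha> s k * \<bar>\<eta> k \<omega>\<bar> * (if A_event \<alpha> k \<rho> s (\<eta> k \<omega>) then 1 else 0)))
               \<longlongrightarrow> 0) (at_right 0))
       \<and> (\<forall>\<^sub>F s in at_right 0. summable (\<lambda>n. let k = n + Mfun s + 1 in
                 wgt \<alpha> s k * (\<integral>\<omega>. \<bar>\<eta> k \<omega>\<bar> * (if A_event \<alpha> k \<rho> s (\<eta> k \<omega>) then 1 else 0) \<partial>M)))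
       \<and> ((\<lambda>s. f_alpha \<alpha> s * (\<Sum>n. let k = n + Mfun s + 1 in
                 wgt \<alpha> s k * (\<integral>\<omega>. \<bar>\<eta> k \<omega>\<bar> * (if A_event \<alpha> k \<rho> s (\<eta> k \<omega>) then 1 else 0) \<partial>M)))
           \<longlongrightarrow> 0) (at_right 0)"
proof -
  interpret P: prob_space M by fact
  have meas[measurable]: "\<And>n. \<eta> (Suc n) \<in> borel_measurable M" using assms(2) by simp
  have m1[measurable]: "\<eta> 1 \<in> borel_measurable M" using assms(2) by simp
  have int1: "integrable M (\<lambda>x. \<bar>\<eta> 1 x\<bar>)" using assms(5) by simp
  have int2: "integrable M (\<lambda>x. (\<eta> 1 x)\<^sup>2)" by fact
  define good where "good s \<longleftrightarrow> 0 < s \<and> s < 1/3 \<and> ln (ln (1/s)) > 0 \<and>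
     Gt \<alpha> s * ln (1/s) * sqrt (s powr (1+2*\<alpha>) * ln (ln (1/s))) \<le> \<rho>" for s
  have e3: "\<forall>\<^sub>F s in at_right 0. s < (1/3::real)"
    by (rule order_tendstoD(2)[OF tendsto_ident_at]) simp
  have ev_good: "eventually good (at_right 0)"
    unfolding good_def
    using eventually_at_right_less[of "0::real"] e3 ev_LL lim_cond[OF assms(10,9)]
    by (intro eventually_conj) auto
  have Mge: "Mfun s \<ge> 3" if "good s" for s
  proof -
    have "1/s > 3" using that unfolding good_def by (simp add: field_simps)
    hence "\<lfloor>1/s\<rfloor> \<ge> 3" by linarith
    thus ?thesis unfolding Mfun_def by linarith
  qed
  have KEY: "real k < x\<^sup>2" if "good s" "k \<ge> Mfun s + 1" "A_event \<alpha> k \<rho> s x" for s k x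
    using that Mge[OF that(1)] unfolding good_def
    by (intro key_threshold[of s]) auto

  define ind where "ind k x = \<bar>\<eta> 1 x\<bar> * ((if real k < (\<eta> 1 x)\<^sup>2 then 1 else 0) / sqrt (real k))" for k x
  have ind_meas[measurable]: "ind k \<in> borel_measurable M" for k unfolding ind_def by measurable
  have ind_nn: "ind k x \<ge> 0" for k x unfolding ind_def by simp
  have ind_int: "integrable M (ind k)" for k
  proof (rule Bochner_Integration.integrable_bound[OF int1])
    show "ind k \<in> borel_measurable M" by simp
    show "AE x in M. norm (ind k x) \<le> norm \<bar>\<eta> 1 x\<bar>"
    proof (rule AE_I2)
      fix x
      have q: "(if real k < (\<eta> 1 x)\<^sup>2 then 1 else 0) / sqrt (real k) \<le> (1::real)"
      proof (cases "k = 0")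
        case False
        hence "sqrt (real k) \<ge> 1" by simp
        thus ?thesis by (auto simp: divide_le_eq_1)
      qed simp
      have "ind k x \<le> \<bar>\<eta> 1 x\<bar>" unfolding ind_def
        by (rule mult_left_le) (use q in auto)
      thus "norm (ind k x) \<le> norm \<bar>\<eta> 1 x\<bar>" using ind_nn[of k x] by simp
    qed
  qed
  have ind_sum: "(\<Sum>n<N. integral\<^sup>L M (ind (n+m+1))) \<le> 2" for N m
  proof -
    have "(\<Sum>n<N. integral\<^sup>L M (ind (n+m+1))) = integral\<^sup>L M (\<lambda>x. \<Sum>n<N. ind (n+m+1) x)"
      using Bochner_Integration.integral_sum[where M=M and I="{..<N}" and f="\<lambda>n. ind (n+m+1)"] ind_int by simp
    also have "\<dots> \<le> integral\<^sup>L M (\<lambda>x. 2 * (\<eta> 1 x)\<^sup>2)"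
    proof (rule integral_mono)
      show "integrable M (\<lambda>x. \<Sum>n<N. ind (n+m+1) x)" by (auto simp: ind_int)
      show "integrable M (\<lambda>x. 2 * (\<eta> 1 x)\<^sup>2)" using int2 by simp
      fix x
      show "(\<Sum>n<N. ind (n+m+1) x) \<le> 2 * (\<eta> 1 x)\<^sup>2"
        using sum_shift_sqrt[where N=N and x="\<eta> 1 x" and m=m] unfolding ind_def by simp
    qed
    also have "\<dots> = 2" using assms(8) by simp
    finally show ?thesis .
  qed
  define T where "T = (\<lambda>s n. let k = n + Mfun s + 1 in
                 wgt \<alpha> s k * (\<integral>\<omega>. \<bar>\<eta> k \<omega>\<bar> * (if A_event \<alpha> k \<rho> s (\<eta> k \<omega>) then 1 else 0) \<partial>M))"
  have Tbound: "0 \<le> T s n \<and> T s n \<le> Cw \<alpha> s * integral\<^sup>L M (ind (n + Mfun s + 1))" if g: "good s" for s n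
  proof -
    define k where "k = n + Mfun s + 1"
    have k1: "k \<ge> 1" "k \<ge> 3" using Mge[OF g] unfolding k_def by auto
    have s0: "s > 0" using g unfolding good_def by simp
    define h where "h x = \<bar>x\<bar> * (if A_event \<alpha> k \<rho> s x then 1 else 0)" for x :: real
    have hm[measurable]: "h \<in> borel_measurable borel" unfolding h_def A_event_def by measurable
    have mk[measurable]: "\<eta> k \<in> borel_measurable M" using assms(2) k1 by simp
    have "(\<integral>\<omega>. \<bar>\<eta> k \<omega>\<bar> * (if A_event \<alpha> k \<rho> s (\<eta> k \<omega>) then 1 else 0) \<partial>M)
        = integral\<^sup>L (distr M borel (\<eta> k)) h"
      unfolding h_def by (rule integral_distr[symmetric]) (auto simp: h_def[symmetric])
    also have "\<dots> = integral\<^sup>L (distr M borel (\<eta> 1)) h" using assms(4)[OF k1(1)] by simp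
    also have "\<dots> = (\<integral>\<omega>. h (\<eta> 1 \<omega>) \<partial>M)" by (rule integral_distr) auto
    finally have Eeq: "(\<integral>\<omega>. \<bar>\<eta> k \<omega>\<bar> * (if A_event \<alpha> k \<rho> s (\<eta> k \<omega>) then 1 else 0) \<partial>M)
        = (\<integral>\<omega>. h (\<eta> 1 \<omega>) \<partial>M)" .
    have hle: "h x \<le> \<bar>x\<bar> * (if real k < x\<^sup>2 then 1 else 0)" for x
      using KEY[OF g _, of k x] unfolding h_def k_def by auto
    have hnn: "h x \<ge> 0" for x unfolding h_def by simp
    have hm1: "(\<lambda>\<omega>. h (\<eta> 1 \<omega>)) \<in> borel_measurable M" by measurable
    have int_h: "integrable M (\<lambda>\<omega>. h (\<eta> 1 \<omega>))"
      by (rule Bochner_Integration.integrable_bound[OF int1 hm1]) (auto simp: h_def)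
    have int_g: "integrable M (\<lambda>\<omega>. \<bar>\<eta> 1 \<omega>\<bar> * (if real k < (\<eta> 1 \<omega>)\<^sup>2 then 1 else 0))"
      by (rule Bochner_Integration.integrable_bound[OF int1]) auto
    have E0: "(\<integral>\<omega>. h (\<eta> 1 \<omega>) \<partial>M) \<ge> 0" by (rule integral_nonneg_AE) (auto simp: hnn)
    have E1: "(\<integral>\<omega>. h (\<eta> 1 \<omega>) \<partial>M) \<le> (\<integral>\<omega>. \<bar>\<eta> 1 \<omega>\<bar> * (if real k < (\<eta> 1 \<omega>)\<^sup>2 then 1 else 0) \<partial>M)"
      by (rule integral_mono[OF int_h int_g]) (rule hle)
    have I: "integral\<^sup>L M (ind k) = (\<integral>\<omega>. \<bar>\<eta> 1 \<omega>\<bar> * (if real k < (\<eta> 1 \<omega>)\<^sup>2 then 1 else 0) \<partial>M) / sqrt (real k)"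
      unfolding ind_def by simp
    have sk: "sqrt (real k) > 0" using k1 by simp
    have w: "wgt \<alpha> s k \<le> Cw \<alpha> s / sqrt (real k)" "wgt \<alpha> s k \<ge> 0"
      using wgt_bound[OF s0 k1(2)] by auto
    have TT: "T s n = wgt \<alpha> s k * (\<integral>\<omega>. h (\<eta> 1 \<omega>) \<partial>M)"
      unfolding T_def k_def[symmetric] Let_def Eeq ..
    have "T s n \<le> Cw \<alpha> s / sqrt (real k) * (\<integral>\<omega>. h (\<eta> 1 \<omega>) \<partial>M)"
      unfolding TT by (rule mult_right_mono[OF w(1) E0])
    also have "\<dots> \<le> Cw \<alpha> s / sqrt (real k) * (\<integral>\<omega>. \<bar>\<eta> 1 \<omega>\<bar> * (if real k < (\<eta> 1 \<omega>)\<^sup>2 then 1 else 0) \<partial>M)"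
      by (rule mult_left_mono[OF E1]) (use sk in \<open>auto simp: Cw_def\<close>)
    also have "\<dots> = Cw \<alpha> s * integral\<^sup>L M (ind k)" unfolding I by simp
    finally show ?thesis using TT w E0 unfolding k_def by simp
  qed
  have Tsum: "summable (T s) \<and> 0 \<le> suminf (T s) \<and> suminf (T s) \<le> Cw \<alpha> s * 2" if g: "good s" for s
  proof -
    have Cw0: "Cw \<alpha> s \<ge> 0" unfolding Cw_def by simp
    have ps: "(\<Sum>n<N. T s n) \<le> Cw \<alpha> s * 2" for N
    proof -
      have "(\<Sum>n<N. T s n) \<le> (\<Sum>n<N. Cw \<alpha> s * integral\<^sup>L M (ind (n + Mfun s + 1)))"
        by (rule sum_mono) (use Tbound[OF g] in auto)
      also have "\<dots> = Cw \<alpha> s * (\<Sum>n<N. integral\<^sup>L M (ind (n + Mfun s + 1)))" by (simp add: sum_distrib_left)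
      also have "\<dots> \<le> Cw \<alpha> s * 2" by (rule mult_left_mono[OF ind_sum Cw0])
      finally show ?thesis .
    qed
    have sm: "summable (T s)" by (rule summableI_nonneg_bounded[OF _ ps]) (use Tbound[OF g] in auto)
    moreover have "0 \<le> suminf (T s)" by (rule suminf_nonneg[OF sm]) (use Tbound[OF g] in auto)
    moreover have "suminf (T s) \<le> Cw \<alpha> s * 2" by (rule suminf_le_const[OF sm ps])
    ultimately show ?thesis by blast
  qed
  have cpos: "c_alpha \<alpha> > 0" unfolding c_alpha_def using assms(9) by simp
  have f_nn: "f_alpha \<alpha> s \<ge> 0" if "good s" for s
    using that cpos unfolding good_def f_alpha_def by (simp add: divide_nonneg_pos)
  have exp1: "\<forall>\<^sub>F s in at_right 0. summable (T s)"
    using ev_good by (rule eventually_mono) (use Tsum in blast)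
  have exp2: "((\<lambda>s. f_alpha \<alpha> s * suminf (T s)) \<longlongrightarrow> 0) (at_right 0)"
  proof (rule tendsto_sandwich[OF _ _ tendsto_const lim_f[OF assms(9)]])
    show "\<forall>\<^sub>F s in at_right 0. 0 \<le> f_alpha \<alpha> s * suminf (T s)"
      using ev_good by (rule eventually_mono) (use Tsum f_nn in auto)
    show "\<forall>\<^sub>F s in at_right 0. f_alpha \<alpha> s * suminf (T s) \<le> f_alpha \<alpha> s * (Cw \<alpha> s * 2)"
      using ev_good by (rule eventually_mono) (use Tsum f_nn in \<open>auto intro!: mult_left_mono\<close>)
  qed

  define B where "B n = {\<omega> \<in> space M. real (Suc n) < (\<eta> (Suc n) \<omega>)\<^sup>2}" for n
  have B_sets[measurable]: "B n \<in> sets M" for n unfolding B_def by measurable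
  have B_meas: "measure M (B n) = measure M {\<omega>\<in>space M. real (Suc n) < (\<eta> 1 \<omega>)\<^sup>2}" for n
  proof -
    define S where "S = {x::real. real (Suc n) < x\<^sup>2}"
    have S: "S \<in> sets borel" unfolding S_def by measurable
    have "B n = \<eta> (Suc n) -` S \<inter> space M" unfolding B_def S_def by auto
    hence "measure M (B n) = measure (distr M borel (\<eta> (Suc n))) S" by (simp add: measure_distr S)
    also have "\<dots> = measure (distr M borel (\<eta> 1)) S" using assms(4)[of "Suc n"] by simp
    also have "\<dots> = measure M (\<eta> 1 -` S \<inter> space M)" by (simp add: measure_distr S)
    also have "\<eta> 1 -` S \<inter> space M = {\<omega>\<in>space M. real (Suc n) < (\<eta> 1 \<omega>)\<^sup>2}" unfolding S_def by auto
    finally show ?thesis .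
  qed
  have B_sum: "summable (\<lambda>n. measure M (B n))"
  proof (rule summableI_nonneg_bounded[where x=1])
    fix N
    define C where "C n = {\<omega>\<in>space M. real (Suc n) < (\<eta> 1 \<omega>)\<^sup>2}" for n
    have C_sets[measurable]: "C n \<in> sets M" for n unfolding C_def by measurable
    have Cint: "integrable M (indicator (C n) :: 'a \<Rightarrow> real)" for n
      by (rule integrable_real_indicator) (auto simp: P.emeasure_finite less_top[symmetric])
    have "(\<Sum>n<N. measure M (B n)) = (\<Sum>n<N. integral\<^sup>L M (indicator (C n)))"
      using B_meas unfolding C_def by (simp add: Int_absorb2)
    also have "\<dots> = integral\<^sup>L M (\<lambda>x. \<Sum>n<N. indicator (C n) x)"
      using Bochner_Integration.integral_sum[where M=M and I="{..<N}" and f="\<lambda>n. indicator (C n)"] Cint by simp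
    also have "\<dots> \<le> integral\<^sup>L M (\<lambda>x. (\<eta> 1 x)\<^sup>2)"
    proof (rule integral_mono)
      show "integrable M (\<lambda>x. \<Sum>n<N. indicator (C n) x :: real)" using Cint by auto
      show "integrable M (\<lambda>x. (\<eta> 1 x)\<^sup>2)" by fact
      fix x assume x: "x \<in> space M"
      have "(\<Sum>n<N. indicator (C n) x :: real) = (\<Sum>n<N. if real (n+1) < (\<eta> 1 x)\<^sup>2 then 1 else 0)"
        using x unfolding C_def by (intro sum.cong) (auto simp: indicator_def)
      also have "\<dots> \<le> min (real N) ((\<eta> 1 x)\<^sup>2)" by (rule sum_ind_le) simp
      also have "\<dots> \<le> (\<eta> 1 x)\<^sup>2" by simp
      finally show "(\<Sum>n<N. indicator (C n) x :: real) \<le> (\<eta> 1 x)\<^sup>2" .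
    qed
    also have "\<dots> = 1" by fact
    finally show "(\<Sum>n<N. measure M (B n)) \<le> 1" .
  qed auto
  have bc: "AE \<omega> in M. eventually (\<lambda>n. \<omega> \<in> space M - B n) sequentially"
    by (rule borel_cantelli_AE1) (auto simp: B_sum P.emeasure_finite less_top[symmetric])
  have as: "AE \<omega> in M.
            (\<forall>\<^sub>F s in at_right 0. summable (\<lambda>n. let k = n + Mfun s + 1 in
                 wgt \<alpha> s k * \<bar>\<eta> k \<omega>\<bar> * (if A_event \<alpha> k \<rho> s (\<eta> k \<omega>) then 1 else 0)))
          \<and> ((\<lambda>s. f_alpha \<alpha> s * (\<Sum>n. let k = n + Mfun s + 1 in
                 wgt \<alpha> s k * \<bar>\<eta> k \<omega>\<bar> * (if A_event \<alpha> k \<rho> s (\<eta> k \<omega>) then 1 else 0)))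
               \<longlongrightarrow> 0) (at_right 0)"
    using bc
  proof (rule eventually_mono)
    fix \<omega> assume "eventually (\<lambda>n. \<omega> \<in> space M - B n) sequentially"
    then obtain N where hN: "\<And>n. n \<ge> N \<Longrightarrow> \<omega> \<in> space M - B n" by (auto simp: eventually_sequentially)
    have noA: "\<not> real k < (\<eta> k \<omega>)\<^sup>2" if "k \<ge> N+1" for k
    proof -
      have "\<omega> \<in> space M - B (k-1)" using hN[of "k-1"] that by simp
      moreover have "Suc (k-1) = k" using that by simp
      ultimately show ?thesis unfolding B_def by auto
    qed
    have e4: "\<forall>\<^sub>F s in at_right 0. s < 1/(real N + 1)"
      by (rule order_tendstoD(2)[OF tendsto_ident_at]) simp
    have ev: "\<forall>\<^sub>F s in at_right 0. good s \<and> s < 1/(real N + 1)"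
      using ev_good e4 by (rule eventually_conj)
    have zero: "(\<lambda>n. let k = n + Mfun s + 1 in
                 wgt \<alpha> s k * \<bar>\<eta> k \<omega>\<bar> * (if A_event \<alpha> k \<rho> s (\<eta> k \<omega>) then 1 else 0)) = (\<lambda>n. 0)"
      if hs: "good s \<and> s < 1/(real N + 1)" for s
    proof
      fix n
      have s0: "s > 0" using hs unfolding good_def by simp
      have "1/s > real N + 1" using hs s0 by (simp add: field_simps)
      hence "\<lfloor>1/s\<rfloor> \<ge> int N + 1" by linarith
      hence MN: "Mfun s \<ge> N" unfolding Mfun_def by linarith
      define k where "k = n + Mfun s + 1"
      have "\<not> A_event \<alpha> k \<rho> s (\<eta> k \<omega>)"
        using KEY[of s k "\<eta> k \<omega>"] noA[of k] hs MN unfolding k_def by auto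
      thus "(let k = n + Mfun s + 1 in
                 wgt \<alpha> s k * \<bar>\<eta> k \<omega>\<bar> * (if A_event \<alpha> k \<rho> s (\<eta> k \<omega>) then 1 else 0)) = 0"
        unfolding k_def Let_def by simp
    qed
    show "(\<forall>\<^sub>F s in at_right 0. summable (\<lambda>n. let k = n + Mfun s + 1 in
                 wgt \<alpha> s k * \<bar>\<eta> k \<omega>\<bar> * (if A_event \<alpha> k \<rho> s (\<eta> k \<omega>) then 1 else 0)))
          \<and> ((\<lambda>s. f_alpha \<alpha> s * (\<Sum>n. let k = n + Mfun s + 1 in
                 wgt \<alpha> s k * \<bar>\<eta> k \<omega>\<bar> * (if A_event \<alpha> k \<rho> s (\<eta> k \<omega>) then 1 else 0)))
               \<longlongrightarrow> 0) (at_right 0)"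
    proof
      show "\<forall>\<^sub>F s in at_right 0. summable (\<lambda>n. let k = n + Mfun s + 1 in
                 wgt \<alpha> s k * \<bar>\<eta> k \<omega>\<bar> * (if A_event \<alpha> k \<rho> s (\<eta> k \<omega>) then 1 else 0))"
        using ev by (rule eventually_mono) (simp only: zero summable_zero)
      show "((\<lambda>s. f_alpha \<alpha> s * (\<Sum>n. let k = n + Mfun s + 1 in
                 wgt \<alpha> s k * \<bar>\<eta> k \<omega>\<bar> * (if A_event \<alpha> k \<rho> s (\<eta> k \<omega>) then 1 else 0)))
               \<longlongrightarrow> 0) (at_right 0)"
        by (rule tendsto_eventually, use ev in \<open>rule eventually_mono\<close>) (simp only: zero suminf_zero mult_zero_right)
    qed
  qed
  show ?thesis
    using as exp1 exp2 unfolding T_def by blast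
qed
end
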